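(* Let $\mathcal{G}\subseteq\mathcal{G}'$ be two building sets of the lattice of flats $\mathcal{L}$ of the same loopless matroid. If $\mathcal{G}'$ is flag, then there exists a binary filtration of $\mathcal{G}'$ from $\mathcal{G}$, i.e. a sequence of building sets $\mathcal{G}=\mathcal{G}_p\subsetneq\mathcal{G}_{p-1}\subsetneq\dots\subsetneq\mathcal{G}_0=\mathcal{G}'$ of $\mathcal{L}$ such that for each $i$, $\mathcal{G}_i\setminus\mathcal{G}_{i+1}$ consists of a single element $G$, and $G$ has exactly two factors in $\mathcal{G}_{i+1}$ (i.e. $\max(\mathcal{G}_{i+1})_{\leqslant G}$ has exactly two elements).
   Context: A building set of $\mathcal{L}$ is $\mathcal{H}\subseteq\mathcal{L}\setminus\{\hat0\}$ such that for every $F\neq\hat0$, with $\max\mathcal{H}_{\leqslant F}$ the maximal elements of $\{H\in\mathcal{H}:H\leqslant F\}$ (the $\mathcal{H}$-factors of $F$), the join map $\prod_{H\in\max\mathcal{H}_{\leqslant F}}[\hat0,H]\to[\hat0,F]$ is a poset isomorphism. $\mathcal{S}\subseteq\mathcal{H}$ is nested if for every antichain $A\subseteq\mathcal{S}$ and $\{S_1,\dots,S_k\}\subseteq A$, $k\geqslant2$, $S_1\vee\dots\vee S_k\notin\mathcal{H}$. $\mathcal{H}$ is flag if the simplicial complex of nested sets contained in $\mathcal{H}\setminus\max\mathcal{H}$ is flag (all minimal non-faces have size $2$). *)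

theory Defs
  imports Main "HOL-Library.FuncSet"
begin

definition matroid :: "'a set \<Rightarrow> ('a set \<Rightarrow> bool) \<Rightarrow> bool" where
  "matroid E indep \<longleftrightarrow>
     finite E \<and> indep {} \<and>
     (\<forall>X. indep X \<longrightarrow> X \<subseteq> E) \<and>
     (\<forall>X Y. indep Y \<and> X \<subseteq> Y \<longrightarrow> indep X) \<and>
     (\<forall>X Y. indep X \<and> indep Y \<and> card X < card Y \<longrightarrow> (\<exists>e\<in>Y - X. indep (insert e X)))"

definition loopless :: "'a set \<Rightarrow> ('a set \<Rightarrow> bool) \<Rightarrow> bool" where
  "loopless E indep \<longleftrightarrow> (\<forall>e\<in>E. indep {e})"

definition mrank :: "('a set \<Rightarrow> bool) \<Rightarrow> 'a set \<Rightarrow> nat" where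
  "mrank indep X = Max {card I | I. I \<subseteq> X \<and> indep I}"

definition mcl :: "'a set \<Rightarrow> ('a set \<Rightarrow> bool) \<Rightarrow> 'a set \<Rightarrow> 'a set" where
  "mcl E indep X = {e \<in> E. mrank indep (insert e (X \<inter> E)) = mrank indep (X \<inter> E)}"

definition flats :: "'a set \<Rightarrow> ('a set \<Rightarrow> bool) \<Rightarrow> 'a set set" where
  "flats E indep = {F. F \<subseteq> E \<and> mcl E indep F = F}"

definition bot_flat :: "'a set \<Rightarrow> ('a set \<Rightarrow> bool) \<Rightarrow> 'a set" where
  "bot_flat E indep = mcl E indep {}"

definition Join_flats :: "'a set \<Rightarrow> ('a set \<Rightarrow> bool) \<Rightarrow> 'a set set \<Rightarrow> 'a set" where
  "Join_flats E indep T = mcl E indep (\<Union>T)"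

definition maximals :: "'a set set \<Rightarrow> 'a set set" where
  "maximals H = {X \<in> H. \<not> (\<exists>Y\<in>H. X \<subset> Y)}"

definition factors :: "'a set set \<Rightarrow> 'a set \<Rightarrow> 'a set set" where
  "factors H F = maximals {X \<in> H. X \<subseteq> F}"

definition building_set :: "'a set \<Rightarrow> ('a set \<Rightarrow> bool) \<Rightarrow> 'a set set \<Rightarrow> bool" where
  "building_set E indep H \<longleftrightarrow>
     H \<subseteq> flats E indep - {bot_flat E indep} \<and>
     (\<forall>F\<in>flats E indep. F \<noteq> bot_flat E indep \<longrightarrow>
        (let M = factors H F;
             P = (\<Pi>\<^sub>E X\<in>M. {Y \<in> flats E indep. Y \<subseteq> X});
             j = (\<lambda>x. Join_flats E indep (x ` M))
         in bij_betw j P {Y \<in> flats E indep. Y \<subseteq> F} \<and>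
            (\<forall>x\<in>P. \<forall>y\<in>P. (\<forall>X\<in>M. x X \<subseteq> y X) \<longleftrightarrow> j x \<subseteq> j y)))"

definition antichain_sets :: "'a set set \<Rightarrow> bool" where
  "antichain_sets A \<longleftrightarrow> (\<forall>X\<in>A. \<forall>Y\<in>A. X \<subseteq> Y \<longrightarrow> X = Y)"

definition nested :: "'a set \<Rightarrow> ('a set \<Rightarrow> bool) \<Rightarrow> 'a set set \<Rightarrow> 'a set set \<Rightarrow> bool" where
  "nested E indep H S \<longleftrightarrow>
     S \<subseteq> H \<and>
     (\<forall>A. A \<subseteq> S \<and> antichain_sets A \<longrightarrow>
        (\<forall>T. T \<subseteq> A \<and> finite T \<and> card T \<ge> 2 \<longrightarrow> Join_flats E indep T \<notin> H))"

definition flag_building_set :: "'a set \<Rightarrow> ('a set \<Rightarrow> bool) \<Rightarrow> 'a set set \<Rightarrow> bool" where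
  "flag_building_set E indep H \<longleftrightarrow>
     (\<forall>N. N \<subseteq> H - maximals H \<and> \<not> nested E indep H N \<and>
          (\<forall>N'. N' \<subset> N \<longrightarrow> nested E indep H N') \<longrightarrow> card N = 2)"

end

theory Submission
  imports Defs
begin

locale lmat =
  fixes E :: "'a set" and indep :: "'a set \<Rightarrow> bool"
  assumes M: "matroid E indep" and LL: "loopless E indep"
begin

abbreviation "r \<equiv> mrank indep"
abbreviation "cl \<equiv> mcl E indep"

lemma finE: "finite E" using M unfolding matroid_def by auto
lemma indep_sub: "indep X \<Longrightarrow> X \<subseteq> E" using M unfolding matroid_def by auto
lemma indep_mono: "indep Y \<Longrightarrow> X \<subseteq> Y \<Longrightarrow> indep X" using M unfolding matroid_def by blast
lemma indep_empty: "indep {}" using M unfolding matroid_def by auto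
lemma augment: "indep X \<Longrightarrow> indep Y \<Longrightarrow> card X < card Y \<Longrightarrow> \<exists>e\<in>Y - X. indep (insert e X)"
  using M unfolding matroid_def by auto

lemma rset_fin: "finite {card I |I. I \<subseteq> X \<and> indep I}"
proof -
  have "{card I |I. I \<subseteq> X \<and> indep I} \<subseteq> {..card E}"
    using indep_sub finE by (auto intro: card_mono)
  then show ?thesis using finite_subset by blast
qed

lemma rank_ge: "I \<subseteq> X \<Longrightarrow> indep I \<Longrightarrow> card I \<le> r X"
  unfolding mrank_def using rset_fin by (intro Max_ge) auto

lemma rank_obtain: "\<exists>I. I \<subseteq> X \<and> indep I \<and> card I = r X"
proof -
  have "r X \<in> {card I |I. I \<subseteq> X \<and> indep I}"
    unfolding mrank_def using rset_fin indep_empty by (intro Max_in) auto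
  then show ?thesis by auto
qed

lemma rank_mono: "X \<subseteq> Y \<Longrightarrow> r X \<le> r Y"
  using rank_obtain[of X] rank_ge by (metis order_trans)

lemma rank_aug: assumes "indep I" "I \<subseteq> S" "card I < r S"
  shows "\<exists>f\<in>S - I. indep (insert f I)"
proof -
  obtain J where "J \<subseteq> S" "indep J" "card J = r S" using rank_obtain by blast
  then show ?thesis using augment[of I J] assms by auto
qed

lemma mem_cl: "e \<in> cl X \<longleftrightarrow> e \<in> E \<and> r (insert e (X \<inter> E)) = r (X \<inter> E)"
  unfolding mcl_def by auto

lemma cl_sub: "cl X \<subseteq> E" unfolding mcl_def by auto
lemma cl_ext: "X \<inter> E \<subseteq> cl X" unfolding mcl_def by (auto simp: insert_absorb)
lemma cl_ext': "X \<subseteq> E \<Longrightarrow> X \<subseteq> cl X" using cl_ext by blast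
lemma cl_inter: "cl (X \<inter> E) = cl X" unfolding mcl_def by (simp add: Int_absorb2 inf.cobounded2)

lemma rank_core:
  assumes XY: "X \<subseteq> Y" "Y \<subseteq> E" and e: "e \<in> E" and eq: "r (insert e X) = r X"
  shows "r (insert e Y) = r Y"
proof (rule ccontr)
  assume ne: "r (insert e Y) \<noteq> r Y"
  have lt: "r Y < r (insert e Y)" using ne rank_mono[of Y "insert e Y"] by (simp add: subset_insertI)
  obtain B where B: "B \<subseteq> X" "indep B" "card B = r X" using rank_obtain by blast
  define P where "P J \<longleftrightarrow> B \<subseteq> J \<and> J \<subseteq> Y \<and> indep J" for J
  have "P B" using B XY unfolding P_def by auto
  moreover have "\<forall>J. P J \<longrightarrow> card J < card E + 1"
    unfolding P_def using XY finE by (auto intro!: card_mono le_imp_less_Suc)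
  ultimately obtain J where J: "P J" and Jmax: "\<forall>J'. P J' \<longrightarrow> card J' \<le> card J"
    using Lattices_Big.ex_has_greatest_nat[of P B card "card E + 1"] by blast
  have finJ: "finite J" using J XY finE unfolding P_def by (meson finite_subset)
  have "card J \<le> r Y" using J rank_ge unfolding P_def by auto
  then have "card J < r (insert e Y)" using lt by auto
  then obtain f where f: "f \<in> insert e Y - J" "indep (insert f J)"
    using rank_aug[of J "insert e Y"] J unfolding P_def by auto
  show False
  proof (cases "f \<in> Y")
    case True
    then have "P (insert f J)" using J f unfolding P_def by auto
    then have "card (insert f J) \<le> card J" using Jmax by auto
    then show False using f finJ by auto
  next
    case False
    then have fe: "f = e" "e \<notin> J" using f by auto
    have "indep (insert e B)" using f fe J indep_mono[of "insert e J" "insert e B"]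
      unfolding P_def by auto
    moreover have "e \<notin> B" using fe J unfolding P_def by auto
    moreover have finB: "finite B" using B XY finE by (meson finite_subset)
    ultimately have "card (insert e B) \<le> r (insert e X)" using B rank_ge[of "insert e B" "insert e X"] by auto
    then show False using eq B \<open>e \<notin> B\<close> finB by auto
  qed
qed

lemma cl_mono: "X \<subseteq> Y \<Longrightarrow> cl X \<subseteq> cl Y"
proof
  fix e assume "X \<subseteq> Y" "e \<in> cl X"
  then show "e \<in> cl Y" unfolding mem_cl using rank_core[of "X \<inter> E" "Y \<inter> E" e] by auto
qed

lemma rank_cl: "r (cl X) = r (X \<inter> E)"
proof (rule ccontr)
  assume ne: "r (cl X) \<noteq> r (X \<inter> E)"
  have "r (X \<inter> E) \<le> r (cl X)" using cl_ext rank_mono by blast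
  then have lt: "r (X \<inter> E) < r (cl X)" using ne by auto
  obtain B where B: "B \<subseteq> X \<inter> E" "indep B" "card B = r (X \<inter> E)" using rank_obtain by blast
  obtain f where f: "f \<in> cl X - B" "indep (insert f B)"
    using rank_aug[of B "cl X"] B lt cl_ext[of X] by auto
  have finB: "finite B" using B finE by (meson finite_subset inf.cobounded2 order_trans)
  have "card (insert f B) \<le> r (insert f (X \<inter> E))" using B f by (intro rank_ge) auto
  moreover have "r (insert f (X \<inter> E)) = r (X \<inter> E)" using f mem_cl by auto
  ultimately show False using B f finB by auto
qed

lemma cl_idem: "cl (cl X) = cl X"
proof
  show "cl X \<subseteq> cl (cl X)" using cl_ext' cl_sub by blast
  show "cl (cl X) \<subseteq> cl X"
  proof
    fix e assume e: "e \<in> cl (cl X)"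
    have cE: "cl X \<inter> E = cl X" using cl_sub by blast
    have "r (insert e (cl X)) = r (cl X)" using e unfolding mem_cl cE by auto
    moreover have "r (insert e (X \<inter> E)) \<le> r (insert e (cl X))"
      using cl_ext by (intro rank_mono) auto
    moreover have "r (X \<inter> E) \<le> r (insert e (X \<inter> E))" by (intro rank_mono) auto
    ultimately show "e \<in> cl X" using e rank_cl unfolding mem_cl by auto
  qed
qed

lemma cl_flat: "cl X \<in> flats E indep"
  unfolding flats_def using cl_sub cl_idem by auto

lemma flatD: "F \<in> flats E indep \<Longrightarrow> F \<subseteq> E \<and> cl F = F"
  unfolding flats_def by auto

lemma cl_empty: "cl {} = {}"
proof -
  have "r {} = 0" unfolding mrank_def using indep_empty by auto
  moreover have "\<And>e. e \<in> E \<Longrightarrow> r {e} \<ge> 1"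
    using LL rank_ge[of "{e}" "{e}" for e] unfolding loopless_def by auto
  ultimately show ?thesis unfolding mcl_def by (auto simp: Suc_le_eq)
qed

lemma bot_eq: "bot_flat E indep = {}" unfolding bot_flat_def using cl_empty by simp

lemma empty_flat: "{} \<in> flats E indep" using cl_flat cl_empty by metis

lemma cl_union_cl: "cl (A \<union> cl B) = cl (A \<union> B)"
proof
  have "(A \<union> B) \<inter> E \<subseteq> A \<union> cl B" using cl_ext by blast
  then show "cl (A \<union> B) \<subseteq> cl (A \<union> cl B)" using cl_mono cl_inter by metis
  have "(A \<union> cl B) \<inter> E \<subseteq> cl (A \<union> B)"
    using cl_ext[of "A \<union> B"] cl_mono[of B "A \<union> B"] by blast
  then show "cl (A \<union> cl B) \<subseteq> cl (A \<union> B)" using cl_mono cl_inter cl_idem by metis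
qed

lemma flat_inter: "F1 \<in> flats E indep \<Longrightarrow> F2 \<in> flats E indep \<Longrightarrow> F1 \<inter> F2 \<in> flats E indep"
proof -
  assume a: "F1 \<in> flats E indep" "F2 \<in> flats E indep"
  have "cl (F1 \<inter> F2) \<subseteq> F1" "cl (F1 \<inter> F2) \<subseteq> F2" using a flatD cl_mono
    by (metis inf.cobounded1 inf.cobounded2)+
  moreover have "F1 \<inter> F2 \<subseteq> cl (F1 \<inter> F2)" using a flatD cl_ext' by (meson le_infI1)
  ultimately show ?thesis unfolding flats_def using a flatD by blast
qed

lemma cl_flat_le: "F \<in> flats E indep \<Longrightarrow> X \<subseteq> F \<Longrightarrow> cl X \<subseteq> F"
  using cl_mono flatD by metis

lemma finite_flats: "finite (flats E indep)"
  using finE unfolding flats_def by (simp add: finite_subset[of _ "Pow E"] subset_iff)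


definition Lf :: "'a set \<Rightarrow> 'a set set" where "Lf X = {Y \<in> flats E indep. Y \<subseteq> X}"

definition decomp :: "'a set set \<Rightarrow> 'a set \<Rightarrow> bool" where
  "decomp M F \<longleftrightarrow> bij_betw (\<lambda>x. Join_flats E indep (x ` M)) (Pi\<^sub>E M Lf) (Lf F) \<and>
     (\<forall>x\<in>Pi\<^sub>E M Lf. \<forall>y\<in>Pi\<^sub>E M Lf. (\<forall>X\<in>M. x X \<subseteq> y X) \<longleftrightarrow>
         Join_flats E indep (x ` M) \<subseteq> Join_flats E indep (y ` M))"

lemma building_iff: "building_set E indep H \<longleftrightarrow>
   H \<subseteq> flats E indep - {{}} \<and> (\<forall>F\<in>flats E indep. F \<noteq> {} \<longrightarrow> decomp (factors H F) F)"
  unfolding building_set_def decomp_def Lf_def Let_def bot_eq by simp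

lemma Join_eq: "Join_flats E indep T = cl (\<Union>T)" unfolding Join_flats_def by simp

lemma empty_Lf: "{} \<in> Lf X" unfolding Lf_def using empty_flat by auto

lemma decomp_top:
  assumes d: "decomp M F" and Mf: "M \<subseteq> flats E indep" and Ff: "F \<in> flats E indep"
  shows "cl (\<Union>M) = F"
proof -
  define t where "t = restrict id M"
  have tP: "t \<in> Pi\<^sub>E M Lf" unfolding t_def Lf_def using Mf by (auto simp: PiE_iff)
  have tM: "t ` M = M" unfolding t_def by simp
  have bij: "bij_betw (\<lambda>x. Join_flats E indep (x ` M)) (Pi\<^sub>E M Lf) (Lf F)"
    using d unfolding decomp_def by blast
  have "Join_flats E indep (t ` M) \<in> Lf F" using bij_betwE[OF bij] tP by blast
  then have 1: "cl (\<Union>M) \<subseteq> F" unfolding Lf_def tM Join_eq by simp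
  have "F \<in> Lf F" unfolding Lf_def using Ff by simp
  then have "F \<in> (\<lambda>x. Join_flats E indep (x ` M)) ` (Pi\<^sub>E M Lf)"
    using bij unfolding bij_betw_def by simp
  then obtain y where y: "y \<in> Pi\<^sub>E M Lf" "Join_flats E indep (y ` M) = F"
    by blast
  have "\<forall>X\<in>M. y X \<subseteq> t X" using y(1) unfolding t_def Lf_def by (auto simp: PiE_iff)
  moreover have ord: "\<forall>x\<in>Pi\<^sub>E M Lf. \<forall>y\<in>Pi\<^sub>E M Lf. (\<forall>X\<in>M. x X \<subseteq> y X) \<longleftrightarrow>
         Join_flats E indep (x ` M) \<subseteq> Join_flats E indep (y ` M)" using d unfolding decomp_def by blast
  ultimately have "F \<subseteq> Join_flats E indep (t ` M)" using ord y tP by blast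
  then show ?thesis using 1 tM Join_eq by auto
qed

lemma decomp_sub:
  assumes d: "decomp M F" and Mf: "M \<subseteq> flats E indep" and S: "S \<subseteq> M" and D: "D \<in> M" "D \<notin> S"
    and K: "K \<in> flats E indep" "K \<subseteq> D" "K \<subseteq> cl (\<Union>S)"
  shows "K = {}"
proof -
  define x where "x = restrict (\<lambda>X. if X \<in> S then X else {}) M"
  define u where "u = restrict (\<lambda>X. if X = D then K else {}) M"
  have xP: "x \<in> Pi\<^sub>E M Lf" unfolding x_def using Mf empty_Lf S by (auto simp: Lf_def PiE_iff)
  have uP: "u \<in> Pi\<^sub>E M Lf" unfolding u_def using K D empty_Lf by (auto simp: Lf_def PiE_iff)
  have "\<Union>(x ` M) = \<Union>S" unfolding x_def using S by auto
  then have jx: "Join_flats E indep (x ` M) = cl (\<Union>S)" by (simp add: Join_eq)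
  have "\<Union>(u ` M) = K" unfolding u_def using D by auto
  then have ju: "Join_flats E indep (u ` M) = K" using K flatD by (simp add: Join_eq)
  have ord: "\<forall>x\<in>Pi\<^sub>E M Lf. \<forall>y\<in>Pi\<^sub>E M Lf. (\<forall>X\<in>M. x X \<subseteq> y X) \<longleftrightarrow>
         Join_flats E indep (x ` M) \<subseteq> Join_flats E indep (y ` M)" using d unfolding decomp_def by blast
  have "Join_flats E indep (u ` M) \<subseteq> Join_flats E indep (x ` M)" using jx ju K by simp
  then have "\<forall>X\<in>M. u X \<subseteq> x X" using ord uP xP by blast
  then have "u D \<subseteq> x D" using D by blast
  then show ?thesis unfolding u_def x_def using D by simp
qed

lemma fac_in: "D \<in> factors H F \<Longrightarrow> D \<in> H \<and> D \<subseteq> F"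
  unfolding factors_def maximals_def by auto

lemma fac_anti: "D1 \<in> factors H F \<Longrightarrow> D2 \<in> factors H F \<Longrightarrow> D1 \<subseteq> D2 \<Longrightarrow> D1 = D2"
  unfolding factors_def maximals_def by auto

lemma fac_max: "D \<in> factors H F \<Longrightarrow> W \<in> H \<Longrightarrow> W \<subseteq> F \<Longrightarrow> D \<subseteq> W \<Longrightarrow> D = W"
  unfolding factors_def maximals_def by auto

lemma fac_cover: assumes "finite H" "W \<in> H" "W \<subseteq> F" shows "\<exists>D\<in>factors H F. W \<subseteq> D"
proof -
  have "finite {X \<in> H. X \<subseteq> F}" using assms by auto
  then obtain m where "m \<in> {X \<in> H. X \<subseteq> F}" "W \<subseteq> m" "\<forall>b\<in>{X \<in> H. X \<subseteq> F}. m \<subseteq> b \<longrightarrow> m = b"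
    using finite_has_maximal2[of "{X \<in> H. X \<subseteq> F}" W] assms by auto
  then show ?thesis unfolding factors_def maximals_def by blast
qed

lemma fin_fac: "finite H \<Longrightarrow> finite (factors H F)"
  unfolding factors_def maximals_def by auto

lemma bs_sub: "building_set E indep H \<Longrightarrow> H \<subseteq> flats E indep \<and> {} \<notin> H"
  using building_iff by auto

lemma bs_fin: "building_set E indep H \<Longrightarrow> finite H"
  using bs_sub finite_flats finite_subset by metis

lemma bs_decomp: "building_set E indep H \<Longrightarrow> F \<in> flats E indep \<Longrightarrow> F \<noteq> {} \<Longrightarrow> decomp (factors H F) F"
  using building_iff by auto

lemma fac_flats: "building_set E indep H \<Longrightarrow> factors H F \<subseteq> flats E indep"
  using bs_sub fac_in by blast

lemma bs_join: "building_set E indep H \<Longrightarrow> F \<in> flats E indep \<Longrightarrow> F \<noteq> {} \<Longrightarrow> cl (\<Union>(factors H F)) = F"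
  using decomp_top bs_decomp fac_flats by metis

lemma bs_sub2:
  assumes b: "building_set E indep H" and F: "F \<in> flats E indep" "F \<noteq> {}"
    and S: "S \<subseteq> factors H F" and D: "D \<in> factors H F" "D \<notin> S"
    and K: "K \<in> flats E indep" "K \<subseteq> D" "K \<subseteq> cl (\<Union>S)"
  shows "K = {}"
  using decomp_sub[OF bs_decomp[OF b F] fac_flats[OF b] S D K] .

lemma bs_disj:
  assumes b: "building_set E indep H" and F: "F \<in> flats E indep" "F \<noteq> {}"
    and D: "D1 \<in> factors H F" "D2 \<in> factors H F" "D1 \<noteq> D2"
  shows "D1 \<inter> D2 = {}"
proof -
  have f: "D1 \<in> flats E indep" "D2 \<in> flats E indep" using D fac_flats[OF b] by auto
  show ?thesis
    using bs_sub2[OF b F, of "{D2}" D1 "D1 \<inter> D2"] D f flat_inter flatD by auto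
qed

lemma bs_union:
  assumes b: "building_set E indep H" and AB: "A \<in> H" "B \<in> H" "A \<inter> B \<noteq> {}"
  shows "cl (A \<union> B) \<in> H"
proof -
  let ?F = "cl (A \<union> B)"
  have fl: "A \<in> flats E indep" "B \<in> flats E indep" using AB bs_sub[OF b] by auto
  have sub: "A \<subseteq> ?F" "B \<subseteq> ?F" using cl_ext'[of "A \<union> B"] fl flatD by auto
  have Fne: "?F \<noteq> {}" using sub AB by auto
  have fin: "finite H" using bs_fin[OF b] .
  obtain P1 where P1: "P1 \<in> factors H ?F" "A \<subseteq> P1" using fac_cover[OF fin AB(1) sub(1)] by auto
  obtain P2 where P2: "P2 \<in> factors H ?F" "B \<subseteq> P2" using fac_cover[OF fin AB(2) sub(2)] by auto
  have "P1 = P2" using bs_disj[OF b cl_flat Fne P1(1) P2(1)] P1 P2 AB by auto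
  then have "A \<union> B \<subseteq> P1" using P1 P2 by auto
  then have "?F \<subseteq> P1" using cl_flat_le fac_flats[OF b] P1 by blast
  then have "?F = P1" using fac_in[OF P1(1)] by auto
  then show ?thesis using fac_in[OF P1(1)] by auto
qed

lemma bs_ge2:
  assumes b: "building_set E indep H" and F: "F \<in> flats E indep" "F \<noteq> {}" "F \<notin> H"
  shows "card (factors H F) \<ge> 2"
proof (rule ccontr)
  assume "\<not> card (factors H F) \<ge> 2"
  then have "card (factors H F) = 0 \<or> card (factors H F) = 1" by auto
  moreover have fin: "finite (factors H F)" using fin_fac bs_fin b by auto
  moreover have j: "cl (\<Union>(factors H F)) = F" using bs_join b F by auto
  ultimately show False
  proof (elim disjE)
    assume "card (factors H F) = 0"
    then have "factors H F = {}" using fin by auto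
    then show False using j F cl_empty by auto
  next
    assume "card (factors H F) = 1"
    then obtain Z where Z: "factors H F = {Z}" using card_1_singletonE by blast
    then have "Z \<in> flats E indep" "Z \<in> H" using fac_flats[OF b, of F] fac_in[of Z H F] by auto
    then show False using j Z flatD F by auto
  qed
qed


lemma fac_two:
  assumes b: "building_set E indep H" and F: "F \<in> flats E indep" "F \<noteq> {}"
    and Z: "Z1 \<in> factors H F" "Z2 \<in> factors H F" "Z1 \<noteq> Z2"
  shows "factors H (cl (Z1 \<union> Z2)) = {Z1, Z2}"
    and "\<And>W. W \<in> H \<Longrightarrow> W \<subseteq> cl (Z1 \<union> Z2) \<Longrightarrow> W \<subseteq> Z1 \<or> W \<subseteq> Z2"
proof -
  let ?Y = "cl (Z1 \<union> Z2)"
  have Zf: "Z1 \<in> flats E indep" "Z2 \<in> flats E indep" "Z1 \<in> H" "Z2 \<in> H" "Z1 \<subseteq> F" "Z2 \<subseteq> F"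
    using Z fac_flats[OF b, of F] fac_in[of _ H F] by auto
  have YF: "?Y \<subseteq> F" using cl_flat_le[OF F(1)] Zf by auto
  have ZY: "Z1 \<subseteq> ?Y" "Z2 \<subseteq> ?Y" using cl_ext'[of "Z1 \<union> Z2"] Zf flatD by auto
  have fin: "finite H" using bs_fin[OF b] .
  show cov: "\<And>W. W \<in> H \<Longrightarrow> W \<subseteq> ?Y \<Longrightarrow> W \<subseteq> Z1 \<or> W \<subseteq> Z2"
  proof -
    fix W assume W: "W \<in> H" "W \<subseteq> ?Y"
    then have "W \<subseteq> F" using YF by auto
    then obtain D where D: "D \<in> factors H F" "W \<subseteq> D" using fac_cover[OF fin W(1) \<open>W \<subseteq> F\<close>] by auto
    have Wf: "W \<in> flats E indep" "W \<noteq> {}" using W bs_sub[OF b] by auto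
    show "W \<subseteq> Z1 \<or> W \<subseteq> Z2"
    proof (rule ccontr)
      assume "\<not> (W \<subseteq> Z1 \<or> W \<subseteq> Z2)"
      then have "D \<notin> {Z1, Z2}" using D by auto
      then have "W = {}" using bs_sub2[OF b F, of "{Z1, Z2}" D W] Z D Wf W by auto
      then show False using Wf by auto
    qed
  qed
  show "factors H ?Y = {Z1, Z2}"
  proof
    show "factors H ?Y \<subseteq> {Z1, Z2}"
    proof
      fix W assume W: "W \<in> factors H ?Y"
      then have "W \<in> H" "W \<subseteq> ?Y" using fac_in by auto
      then have "W \<subseteq> Z1 \<or> W \<subseteq> Z2" using cov by auto
      then show "W \<in> {Z1, Z2}" using fac_max[OF W] Zf ZY by auto
    qed
    show "{Z1, Z2} \<subseteq> factors H ?Y"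
    proof -
      have "\<forall>Y'\<in>H. Y' \<subseteq> ?Y \<longrightarrow> \<not> Z1 \<subset> Y'"
        using cov fac_anti[OF Z(1) Z(2)] Z(3) by blast
      then have "Z1 \<in> factors H ?Y"
        unfolding factors_def maximals_def using Zf ZY by blast
      moreover have "\<forall>Y'\<in>H. Y' \<subseteq> ?Y \<longrightarrow> \<not> Z2 \<subset> Y'"
        using cov fac_anti[OF Z(2) Z(1)] Z(3) by blast
      then have "Z2 \<in> factors H ?Y"
        unfolding factors_def maximals_def using Zf ZY by blast
      ultimately show ?thesis by auto
    qed
  qed
qed

lemma exists_two:
  assumes b: "building_set E indep G" and b': "building_set E indep G'" and sub: "G \<subseteq> G'"
    and fl: "flag_building_set E indep G'" and X: "X \<in> G'" "X \<notin> G"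
  shows "\<exists>Y\<in>G' - G. card (factors G Y) = 2"
proof -
  have Xf: "X \<in> flats E indep" "X \<noteq> {}" using X bs_sub[OF b'] by auto
  define M where "M = factors G X"
  have finM: "finite M" unfolding M_def using fin_fac bs_fin b by auto
  have c2: "card M \<ge> 2" unfolding M_def using bs_ge2[OF b Xf X(2)] .
  have jM: "cl (\<Union>M) = X" unfolding M_def using bs_join[OF b Xf] .
  have MG: "M \<subseteq> G" "\<And>Z. Z \<in> M \<Longrightarrow> Z \<subseteq> X" unfolding M_def using fac_in by auto
  have nn: "\<not> nested E indep G' M"
  proof
    assume "nested E indep G' M"
    moreover have "antichain_sets M" unfolding antichain_sets_def M_def using fac_anti by blast
    ultimately have "Join_flats E indep M \<notin> G'" unfolding nested_def using finM c2 by blast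
    then show False using jM X Join_eq by auto
  qed
  define P where "P N \<longleftrightarrow> N \<subseteq> M \<and> \<not> nested E indep G' N" for N
  have "P M" unfolding P_def using nn by auto
  then obtain N where N: "P N" and Nmin: "\<forall>N'. P N' \<longrightarrow> card N \<le> card N'"
    using ex_has_least_nat[of P M card] by blast
  have NM: "N \<subseteq> M" and Nn: "\<not> nested E indep G' N" using N unfolding P_def by auto
  have finN: "finite N" using NM finM finite_subset by auto
  have allsub: "\<forall>N'. N' \<subset> N \<longrightarrow> nested E indep G' N'"
  proof (intro allI impI)
    fix N' assume a: "N' \<subset> N"
    have lt: "card N' < card N" using finN psubset_card_mono a by blast
    have "N' \<subseteq> M" using a NM by blast
    show "nested E indep G' N'"
    proof (rule ccontr)
      assume "\<not> nested E indep G' N'"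
      then have "P N'" unfolding P_def using \<open>N' \<subseteq> M\<close> by blast
      then have "card N \<le> card N'" using Nmin by blast
      then show False using lt by simp
    qed
  qed
  have Nmax: "N \<subseteq> G' - maximals G'"
  proof
    fix Z assume "Z \<in> N"
    then have Z: "Z \<in> G" "Z \<subseteq> X" using NM MG by auto
    then have "Z \<subset> X" using X by auto
    then have "Z \<notin> maximals G'" unfolding maximals_def using X by blast
    then show "Z \<in> G' - maximals G'" using Z sub by blast
  qed
  have flg: "\<forall>N. N \<subseteq> G' - maximals G' \<and> \<not> nested E indep G' N \<and>
          (\<forall>N'. N' \<subset> N \<longrightarrow> nested E indep G' N') \<longrightarrow> card N = 2"
    using fl unfolding flag_building_set_def .
  have cN: "card N = 2" using flg[rule_format, OF conjI[OF Nmax conjI[OF Nn allsub]]] .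
  have NG': "N \<subseteq> G'" using NM MG sub by auto
  have "\<not> (\<forall>A. A \<subseteq> N \<and> antichain_sets A \<longrightarrow>
        (\<forall>T. T \<subseteq> A \<and> finite T \<and> card T \<ge> 2 \<longrightarrow> Join_flats E indep T \<notin> G'))"
    using Nn NG' unfolding nested_def by blast
  then obtain A T where AT: "A \<subseteq> N" "T \<subseteq> A" "finite T" "card T \<ge> 2" "Join_flats E indep T \<in> G'"
    by blast
  have TsN: "T \<subseteq> N" using AT by auto
  have "card T \<le> card N" using card_mono[OF finN TsN] .
  then have "card T = card N" using AT cN by auto
  then have TN: "T = N" using card_subset_eq[OF finN TsN] by auto
  obtain Z1 Z2 where Z12: "N = {Z1, Z2}" "Z1 \<noteq> Z2" using cN card_2_iff[of N] by blast
  let ?Y = "cl (Z1 \<union> Z2)"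
  have "Join_flats E indep N \<in> G'" using AT(5) TN by simp
  then have YG': "?Y \<in> G'" unfolding Z12(1) Join_eq by simp
  have ZM: "Z1 \<in> factors G X" "Z2 \<in> factors G X" using NM Z12(1) unfolding M_def by auto
  have fY: "factors G ?Y = {Z1, Z2}" using fac_two(1)[OF b Xf ZM Z12(2)] .
  have ZX: "Z1 \<subseteq> X" "Z2 \<subseteq> X" using ZM fac_in by blast+
  have YX: "?Y \<subseteq> X" using cl_flat_le[OF Xf(1)] ZX by simp
  have Zf: "Z1 \<in> flats E indep" "Z2 \<in> flats E indep" using ZM fac_flats[OF b, of X] by blast+
  have ZY: "Z1 \<subseteq> ?Y" "Z2 \<subseteq> ?Y" using cl_ext'[of "Z1 \<union> Z2"] Zf flatD by blast+
  have "?Y \<notin> G"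
  proof
    assume "?Y \<in> G"
    then obtain D where D: "D \<in> factors G X" "?Y \<subseteq> D" using fac_cover[OF bs_fin[OF b] \<open>?Y \<in> G\<close> YX] by blast
    have "Z1 = D" using fac_anti[OF ZM(1) D(1)] ZY D by blast
    moreover have "Z2 = D" using fac_anti[OF ZM(2) D(1)] ZY D by blast
    ultimately show False using Z12 by simp
  qed
  moreover have "card (factors G ?Y) = 2" using fY Z12(2) by simp
  ultimately show ?thesis using YG' by blast
qed


lemma decomp_comp:
  assumes dM: "decomp M F" and dY: "decomp {Z1, Z2} Y"
    and Z: "Z1 \<in> M" "Z2 \<in> M" and YM: "Y \<notin> M"
  shows "decomp (insert Y (M - {Z1, Z2})) F"
proof -
  let ?M0 = "M - {Z1, Z2}"
  let ?M' = "insert Y ?M0"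
  let ?Z = "{Z1, Z2}"
  let ?P = "Pi\<^sub>E M Lf"
  let ?P' = "Pi\<^sub>E ?M' Lf"
  let ?Q = "Pi\<^sub>E ?Z Lf"
  define jM where "jM x = Join_flats E indep (x ` M)" for x
  define j' where "j' x = Join_flats E indep (x ` ?M')" for x
  define jY where "jY q = Join_flats E indep (q ` ?Z)" for q
  define psi where "psi y = restrict (\<lambda>X. if X = Y then jY (restrict y ?Z) else y X) ?M'" for y
  have bijM: "bij_betw jM ?P (Lf F)" using dM unfolding decomp_def jM_def by blast
  have ordM: "\<And>x y. x \<in> ?P \<Longrightarrow> y \<in> ?P \<Longrightarrow> (\<forall>X\<in>M. x X \<subseteq> y X) \<longleftrightarrow> jM x \<subseteq> jM y"
    using dM unfolding decomp_def jM_def by blast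
  have bijY: "bij_betw jY ?Q (Lf Y)" using dY unfolding decomp_def jY_def by blast
  have ordY: "\<And>x y. x \<in> ?Q \<Longrightarrow> y \<in> ?Q \<Longrightarrow> (\<forall>X\<in>?Z. x X \<subseteq> y X) \<longleftrightarrow> jY x \<subseteq> jY y"
    using dY unfolding decomp_def jY_def by blast
  have YM0: "Y \<notin> ?M0" using YM by blast
  have rQ: "\<And>y. y \<in> ?P \<Longrightarrow> restrict y ?Z \<in> ?Q"
    using Z by (auto simp: PiE_iff)
  have psiP: "\<And>y. y \<in> ?P \<Longrightarrow> psi y \<in> ?P'"
  proof -
    fix y assume y: "y \<in> ?P"
    have "jY (restrict y ?Z) \<in> Lf Y" using bij_betwE[OF bijY] rQ[OF y] by blast
    moreover have "\<forall>X\<in>?M0. y X \<in> Lf X" using y by (auto simp: PiE_iff)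
    ultimately show "psi y \<in> ?P'" unfolding psi_def using YM0 by (auto simp: PiE_iff)
  qed
  have psiJ: "\<And>y. y \<in> ?P \<Longrightarrow> j' (psi y) = jM y"
  proof -
    fix y assume y: "y \<in> ?P"
    have img: "psi y ` ?M' = insert (jY (restrict y ?Z)) (y ` ?M0)"
      unfolding psi_def using YM0 by auto
    have "jY (restrict y ?Z) = cl (y Z1 \<union> y Z2)" unfolding jY_def Join_eq by simp
    then have "\<Union>(psi y ` ?M') = \<Union>(y ` ?M0) \<union> cl (y Z1 \<union> y Z2)" using img by auto
    then have "j' (psi y) = cl (\<Union>(y ` ?M0) \<union> (y Z1 \<union> y Z2))"
      unfolding j'_def Join_eq using cl_union_cl by simp
    moreover have "\<Union>(y ` ?M0) \<union> (y Z1 \<union> y Z2) = \<Union>(y ` M)" using Z by blast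
    ultimately show "j' (psi y) = jM y" unfolding jM_def Join_eq by simp
  qed
  have psiO: "\<And>y y'. y \<in> ?P \<Longrightarrow> y' \<in> ?P \<Longrightarrow>
      (\<forall>X\<in>?M'. psi y X \<subseteq> psi y' X) \<longleftrightarrow> (\<forall>X\<in>M. y X \<subseteq> y' X)"
  proof -
    fix y y' assume y: "y \<in> ?P" and y': "y' \<in> ?P"
    have "(\<forall>X\<in>?M'. psi y X \<subseteq> psi y' X) \<longleftrightarrow>
          jY (restrict y ?Z) \<subseteq> jY (restrict y' ?Z) \<and> (\<forall>X\<in>?M0. y X \<subseteq> y' X)"
      unfolding psi_def using YM0 by auto
    also have "\<dots> \<longleftrightarrow> (\<forall>X\<in>?Z. y X \<subseteq> y' X) \<and> (\<forall>X\<in>?M0. y X \<subseteq> y' X)"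
      using ordY[OF rQ[OF y] rQ[OF y']] by simp
    also have "\<dots> \<longleftrightarrow> (\<forall>X\<in>M. y X \<subseteq> y' X)" using Z by blast
    finally show "(\<forall>X\<in>?M'. psi y X \<subseteq> psi y' X) \<longleftrightarrow> (\<forall>X\<in>M. y X \<subseteq> y' X)" .
  qed
  have inj: "inj_on psi ?P"
  proof (rule inj_onI)
    fix y y' assume y: "y \<in> ?P" and y': "y' \<in> ?P" and eq: "psi y = psi y'"
    have "\<forall>X\<in>M. y X \<subseteq> y' X" using psiO[OF y y'] eq by simp
    moreover have "\<forall>X\<in>M. y' X \<subseteq> y X" using psiO[OF y' y] eq by simp
    ultimately show "y = y'" using PiE_ext[OF y y'] by blast
  qed
  have surj: "psi ` ?P = ?P'"
  proof
    show "psi ` ?P \<subseteq> ?P'" using psiP by blast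
    show "?P' \<subseteq> psi ` ?P"
    proof
      fix x assume x: "x \<in> ?P'"
      have "x Y \<in> Lf Y" using x by (auto simp: PiE_iff)
      then obtain q where q: "q \<in> ?Q" "jY q = x Y"
        using bijY unfolding bij_betw_def by (metis imageE)
      define y where "y = restrict (\<lambda>X. if X \<in> ?Z then q X else x X) M"
      have yP: "y \<in> ?P" unfolding y_def using q x Z by (auto simp: PiE_iff)
      have rq: "restrict y ?Z = q"
      proof
        fix X show "restrict y ?Z X = q X"
        proof (cases "X \<in> ?Z")
          case True
          then have "X \<in> M" using Z by blast
          then show ?thesis using True unfolding y_def by simp
        next
          case False
          then show ?thesis using q(1) PiE_arb[of q ?Z Lf X] by simp
        qed
      qed
      have "psi y = x"
      proof (rule PiE_ext[OF psiP[OF yP] x])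
        fix X assume X: "X \<in> ?M'"
        show "psi y X = x X"
        proof (cases "X = Y")
          case True
          then show ?thesis unfolding psi_def using rq q by simp
        next
          case False
          then have "X \<in> ?M0" using X by blast
          then show ?thesis unfolding psi_def y_def using False by simp
        qed
      qed
      then show "x \<in> psi ` ?P" using yP by blast
    qed
  qed
  have bpsi: "bij_betw psi ?P ?P'" unfolding bij_betw_def using inj surj by blast
  have "bij_betw (j' \<circ> psi) ?P (Lf F) = bij_betw jM ?P (Lf F)"
    by (rule bij_betw_cong) (simp add: psiJ)
  then have "bij_betw (j' \<circ> psi) ?P (Lf F)" using bijM by blast
  then have bij': "bij_betw j' ?P' (Lf F)" using bij_betw_comp_iff[OF bpsi, of j' "Lf F"] by blast
  have ord': "\<forall>x\<in>?P'. \<forall>x'\<in>?P'. (\<forall>X\<in>?M'. x X \<subseteq> x' X) \<longleftrightarrow> j' x \<subseteq> j' x'"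
  proof (intro ballI)
    fix x x' assume x: "x \<in> ?P'" and x': "x' \<in> ?P'"
    have "x \<in> psi ` ?P" using x surj by simp
    then obtain y where y: "y \<in> ?P" "psi y = x" by (rule imageE) simp
    have "x' \<in> psi ` ?P" using x' surj by simp
    then obtain y' where y': "y' \<in> ?P" "psi y' = x'" by (rule imageE) simp
    have "(\<forall>X\<in>?M'. psi y X \<subseteq> psi y' X) \<longleftrightarrow> j' (psi y) \<subseteq> j' (psi y')"
      unfolding psiO[OF y(1) y'(1)] ordM[OF y(1) y'(1)] psiJ[OF y(1)] psiJ[OF y'(1)] ..
    then show "(\<forall>X\<in>?M'. x X \<subseteq> x' X) \<longleftrightarrow> j' x \<subseteq> j' x'" unfolding y(2) y'(2) .
  qed
  show ?thesis unfolding decomp_def j'_def[symmetric] using bij' ord' by (rule conjI)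
qed


lemma fac_iff: "X \<in> factors H F \<longleftrightarrow> X \<in> H \<and> X \<subseteq> F \<and> (\<forall>W\<in>H. W \<subseteq> F \<longrightarrow> \<not> X \<subset> W)"
  unfolding factors_def maximals_def by blast

lemma not_bigger:
  assumes b: "building_set E indep G" and b': "building_set E indep G'" and sub: "G \<subseteq> G'"
    and Y: "Y \<in> G'" "Y \<notin> G"
    and maxY: "\<forall>W. W \<in> G' \<and> W \<notin> G \<and> card (factors G W) = 2 \<longrightarrow> \<not> Y \<subset> W"
    and fY: "factors G Y = {Za, Zb}" "Za \<noteq> Zb"
    and F: "F \<in> flats E indep" "F \<noteq> {}" "Y \<subseteq> F"
    and C: "Ca \<in> factors G F" "Cb \<in> factors G F" "Za \<subseteq> Ca" "Zb \<subseteq> Cb" "Ca \<noteq> Cb"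
  shows "Ca = Za"
proof (rule ccontr)
  assume ne: "Ca \<noteq> Za"
  have finG: "finite G" using bs_fin[OF b] .
  have Yf: "Y \<in> flats E indep" "Y \<noteq> {}" using Y bs_sub[OF b'] by auto
  have ZaF: "Za \<in> factors G Y" "Zb \<in> factors G Y" using fY by auto
  have Zs: "Za \<in> G" "Zb \<in> G" "Za \<subseteq> Y" "Zb \<subseteq> Y" using ZaF fac_in by blast+
  have Zne: "Za \<noteq> {}" "Zb \<noteq> {}" using Zs bs_sub[OF b] by blast+
  have Yj: "cl (Za \<union> Zb) = Y" using bs_join[OF b Yf] unfolding fY(1) by simp
  have covY: "\<And>W. W \<in> G \<Longrightarrow> W \<subseteq> Y \<Longrightarrow> W \<subseteq> Za \<or> W \<subseteq> Zb"
  proof -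
    fix W assume W: "W \<in> G" "W \<subseteq> Y"
    obtain D where "D \<in> factors G Y" "W \<subseteq> D" using fac_cover[OF finG W] by blast
    then show "W \<subseteq> Za \<or> W \<subseteq> Zb" using fY by blast
  qed
  have Cs: "Ca \<in> G" "Ca \<subseteq> F" "Cb \<in> G" "Cb \<subseteq> F" using fac_in[OF C(1)] fac_in[OF C(2)] by blast+
  have Cf: "Ca \<in> flats E indep" "Cb \<in> flats E indep" using Cs bs_sub[OF b] by blast+
  have "Ca \<inter> Y \<noteq> {}" using C(3) Zs Zne by blast
  moreover have "Ca \<in> G'" using Cs sub by blast
  ultimately have WG': "cl (Ca \<union> Y) \<in> G'" using bs_union[OF b' _ Y(1)] by blast
  define W where "W = cl (Ca \<union> Y)"
  have Wf: "W \<in> flats E indep" unfolding W_def by (rule cl_flat)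
  have "Ca \<union> Y \<subseteq> F" using Cs F by blast
  then have WF: "W \<subseteq> F" unfolding W_def using cl_flat_le[OF F(1)] by blast
  have CW: "Ca \<subseteq> W" "Y \<subseteq> W" unfolding W_def using cl_ext'[of "Ca \<union> Y"] Cf Yf flatD by blast+
  have Wne: "W \<noteq> {}" using CW Yf by blast
  have WnG: "W \<notin> G"
  proof
    assume "W \<in> G"
    then obtain D where D: "D \<in> factors G F" "W \<subseteq> D" using fac_cover[OF finG \<open>W \<in> G\<close> WF] by blast
    have "Ca \<subseteq> D" using CW(1) D(2) by (rule subset_trans)
    then have CaD: "Ca = D" using fac_anti[OF C(1) D(1)] by blast
    have "Zb \<subseteq> Ca" using Zs(4) CW(2) D(2) CaD by blast
    moreover have "Ca \<inter> Cb = {}" using bs_disj[OF b F(1) F(2) C(1) C(2) C(5)] .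
    ultimately show False using C(4) Zne(2) by blast
  qed
  have YW: "Y \<subset> W"
  proof -
    have "Y \<noteq> W"
    proof
      assume "Y = W"
      then have "Ca \<subseteq> Za \<or> Ca \<subseteq> Zb" using covY Cs CW by blast
      then show False
      proof
        assume "Ca \<subseteq> Za" then show False using ne C by blast
      next
        assume "Ca \<subseteq> Zb" then have "Za \<subseteq> Zb" using C by blast
        then show False using fac_anti[OF ZaF] fY by blast
      qed
    qed
    then show ?thesis using CW by blast
  qed
  obtain Q1 where Q1: "Q1 \<in> factors G W" "Ca \<subseteq> Q1" using fac_cover[OF finG Cs(1) CW(1)] by blast
  have "Zb \<subseteq> W" using Zs CW by blast
  then obtain Q2 where Q2: "Q2 \<in> factors G W" "Zb \<subseteq> Q2"
    using fac_cover[OF finG Zs(2)] by blast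
  have Qs: "Q1 \<in> flats E indep" "Q2 \<in> flats E indep" "Q1 \<subseteq> W" "Q2 \<subseteq> W" "Q1 \<in> G"
    using fac_in[OF Q1(1)] fac_in[OF Q2(1)] bs_sub[OF b] by blast+
  have QQ: "Q1 \<noteq> Q2"
  proof
    assume "Q1 = Q2"
    then have "Za \<union> Zb \<subseteq> Q1" using Q1 Q2 C by blast
    then have "Y \<subseteq> Q1" using cl_flat_le[OF Qs(1)] unfolding Yj[symmetric] by blast
    then have "W \<subseteq> Q1" unfolding W_def using cl_flat_le[OF Qs(1)] Q1 by simp
    then have "W = Q1" using Qs(3) by (rule subset_antisym)
    then show False using Qs(5) WnG by simp
  qed
  have Wsub: "W \<subseteq> cl (\<Union>{Q1, Q2})"
  proof -
    have QE: "Q1 \<subseteq> E" "Q2 \<subseteq> E" using Qs flatD by blast+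
    have "Ca \<subseteq> cl (Q1 \<union> Q2)" using Q1 cl_ext'[of "Q1 \<union> Q2"] QE by blast
    moreover have "Y \<subseteq> cl (Q1 \<union> Q2)"
    proof -
      have "Za \<union> Zb \<subseteq> Q1 \<union> Q2" using Q1 Q2 C by blast
      then show ?thesis using cl_mono[of "Za \<union> Zb" "Q1 \<union> Q2"] unfolding Yj by blast
    qed
    ultimately have "Ca \<union> Y \<subseteq> cl (Q1 \<union> Q2)" by blast
    then show ?thesis unfolding W_def using cl_flat_le[OF cl_flat] by simp
  qed
  have "factors G W = {Q1, Q2}"
  proof
    show "{Q1, Q2} \<subseteq> factors G W" using Q1 Q2 by blast
    show "factors G W \<subseteq> {Q1, Q2}"
    proof
      fix D assume D: "D \<in> factors G W"
      show "D \<in> {Q1, Q2}"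
      proof (rule ccontr)
        assume "D \<notin> {Q1, Q2}"
        moreover have "D \<in> flats E indep" "D \<subseteq> W" "D \<in> G" using D fac_in[of D G W] bs_sub[OF b] by blast+
        ultimately have "D = {}"
          using bs_sub2[OF b Wf Wne, of "{Q1, Q2}" D D] Q1 Q2 D Wsub by blast
        then show False using \<open>D \<in> G\<close> bs_sub[OF b] by blast
      qed
    qed
  qed
  then have "card (factors G W) = 2" using QQ by simp
  then show False using maxY WG' WnG YW unfolding W_def by blast
qed


lemma fac_insert_same:
  assumes "Y \<subset> C" "C \<in> factors H F"
  shows "factors (insert Y H) F = factors H F"
proof
  show "factors (insert Y H) F \<subseteq> factors H F"
  proof
    fix X assume X: "X \<in> factors (insert Y H) F"
    then have "X \<noteq> Y" using assms unfolding fac_iff by blast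
    then show "X \<in> factors H F" using X unfolding fac_iff by blast
  qed
  show "factors H F \<subseteq> factors (insert Y H) F"
  proof
    fix X assume X: "X \<in> factors H F"
    have "\<not> X \<subset> Y"
    proof
      assume "X \<subset> Y"
      then have "X \<subset> C" using assms by blast
      then show False using X assms unfolding fac_iff by blast
    qed
    then show "X \<in> factors (insert Y H) F" using X unfolding fac_iff by blast
  qed
qed

lemma fac_insert_merge:
  assumes finH: "finite H" and YF: "Y \<subseteq> F" and YH: "Y \<notin> H"
    and Z: "Z1 \<in> factors H F" "Z2 \<in> factors H F" "Z1 \<noteq> Z2" "Z1 \<subseteq> Y" "Z2 \<subseteq> Y"
    and covY: "\<And>W. W \<in> H \<Longrightarrow> W \<subseteq> Y \<Longrightarrow> W \<subseteq> Z1 \<or> W \<subseteq> Z2"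
  shows "factors (insert Y H) F = insert Y (factors H F - {Z1, Z2})"
proof
  have ZH: "Z1 \<in> H" "Z2 \<in> H" using Z fac_in by blast+
  show "factors (insert Y H) F \<subseteq> insert Y (factors H F - {Z1, Z2})"
  proof
    fix X assume X: "X \<in> factors (insert Y H) F"
    show "X \<in> insert Y (factors H F - {Z1, Z2})"
    proof (cases "X = Y")
      case True then show ?thesis by blast
    next
      case False
      then have XH: "X \<in> factors H F" using X unfolding fac_iff by blast
      have "X \<noteq> Z1"
      proof
        assume "X = Z1"
        then have "X \<subset> Y" using Z ZH YH by blast
        then show False using X YF unfolding fac_iff by blast
      qed
      moreover have "X \<noteq> Z2"
      proof
        assume "X = Z2"
        then have "X \<subset> Y" using Z ZH YH by blast
        then show False using X YF unfolding fac_iff by blast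
      qed
      ultimately show ?thesis using XH by blast
    qed
  qed
  show "insert Y (factors H F - {Z1, Z2}) \<subseteq> factors (insert Y H) F"
  proof
    fix X assume X: "X \<in> insert Y (factors H F - {Z1, Z2})"
    show "X \<in> factors (insert Y H) F"
    proof (cases "X = Y")
      case True
      have "\<forall>W\<in>insert Y H. W \<subseteq> F \<longrightarrow> \<not> Y \<subset> W"
      proof (intro ballI impI notI)
        fix W assume W: "W \<in> insert Y H" "W \<subseteq> F" "Y \<subset> W"
        then have WH: "W \<in> H" by blast
        obtain D where D: "D \<in> factors H F" "W \<subseteq> D" using fac_cover[OF finH WH W(2)] by blast
        have "Z1 \<subseteq> D" using Z(4) W(3) D(2) by blast
        then have "Z1 = D" using fac_anti[OF Z(1) D(1)] by blast
        moreover have "Z2 \<subseteq> D" using Z(5) W(3) D(2) by blast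
        then have "Z2 = D" using fac_anti[OF Z(2) D(1)] by blast
        ultimately show False using Z(3) by simp
      qed
      then show ?thesis using True YF unfolding fac_iff by blast
    next
      case False
      then have XH: "X \<in> factors H F" "X \<noteq> Z1" "X \<noteq> Z2" using X by blast+
      have "\<not> X \<subset> Y"
      proof
        assume XY: "X \<subset> Y"
        have "X \<in> H" using XH fac_in by blast
        then have "X \<subseteq> Z1 \<or> X \<subseteq> Z2" using covY XY by blast
        then show False
        proof
          assume "X \<subseteq> Z1" then show False using fac_anti[OF XH(1) Z(1)] XH by blast
        next
          assume "X \<subseteq> Z2" then show False using fac_anti[OF XH(1) Z(2)] XH by blast
        qed
      qed
      then show ?thesis using XH unfolding fac_iff by blast
    qed
  qed
qed


lemma add_building:
  assumes b: "building_set E indep G" and b': "building_set E indep G'" and sub: "G \<subseteq> G'"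
    and Y: "Y \<in> G'" "Y \<notin> G" and c2: "card (factors G Y) = 2"
    and maxY: "\<forall>W. W \<in> G' \<and> W \<notin> G \<and> card (factors G W) = 2 \<longrightarrow> \<not> Y \<subset> W"
  shows "building_set E indep (insert Y G)"
proof -
  have finG: "finite G" using bs_fin[OF b] .
  have Yf: "Y \<in> flats E indep" "Y \<noteq> {}" using Y bs_sub[OF b'] by auto
  obtain Z1 Z2 where fY: "factors G Y = {Z1, Z2}" "Z1 \<noteq> Z2" using c2 card_2_iff[of "factors G Y"] by blast
  have ZF: "Z1 \<in> factors G Y" "Z2 \<in> factors G Y" using fY by blast+
  have Zs: "Z1 \<in> G" "Z2 \<in> G" "Z1 \<subseteq> Y" "Z2 \<subseteq> Y" using fac_in[OF ZF(1)] fac_in[OF ZF(2)] by blast+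
  have Yj: "cl (Z1 \<union> Z2) = Y" using bs_join[OF b Yf] unfolding fY(1) by simp
  have dY: "decomp {Z1, Z2} Y" using bs_decomp[OF b Yf] unfolding fY(1) .
  have covY: "\<And>W. W \<in> G \<Longrightarrow> W \<subseteq> Y \<Longrightarrow> W \<subseteq> Z1 \<or> W \<subseteq> Z2"
  proof -
    fix W assume W: "W \<in> G" "W \<subseteq> Y"
    obtain D where "D \<in> factors G Y" "W \<subseteq> D" using fac_cover[OF finG W] by blast
    then show "W \<subseteq> Z1 \<or> W \<subseteq> Z2" using fY by blast
  qed
  have "insert Y G \<subseteq> flats E indep - {{}}" using Yf bs_sub[OF b] by blast
  moreover have "\<forall>F\<in>flats E indep. F \<noteq> {} \<longrightarrow> decomp (factors (insert Y G) F) F"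
  proof (intro ballI impI)
    fix F assume F: "F \<in> flats E indep" "F \<noteq> {}"
    have dF: "decomp (factors G F) F" using bs_decomp[OF b F] .
    show "decomp (factors (insert Y G) F) F"
    proof (cases "Y \<subseteq> F")
      case False
      then have "{X \<in> insert Y G. X \<subseteq> F} = {X \<in> G. X \<subseteq> F}" by blast
      then have "factors (insert Y G) F = factors G F" unfolding factors_def by simp
      then show ?thesis using dF by simp
    next
      case True
      obtain C1 where C1: "C1 \<in> factors G F" "Z1 \<subseteq> C1" using fac_cover[OF finG Zs(1)] Zs True by blast
      obtain C2 where C2: "C2 \<in> factors G F" "Z2 \<subseteq> C2" using fac_cover[OF finG Zs(2)] Zs True by blast
      show ?thesis
      proof (cases "C1 = C2")
        case True
        have C1f: "C1 \<in> flats E indep" "C1 \<in> G" using fac_in[OF C1(1)] bs_sub[OF b] by blast+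
        have "Z1 \<union> Z2 \<subseteq> C1" using C1 C2 True by blast
        then have "Y \<subseteq> C1" using cl_flat_le[OF C1f(1)] unfolding Yj[symmetric] by blast
        moreover have "Y \<noteq> C1"
        proof
          assume "Y = C1" then show False using C1f(2) Y(2) by simp
        qed
        ultimately have "Y \<subset> C1" by (rule psubsetI)
        then have "factors (insert Y G) F = factors G F" using fac_insert_same[OF _ C1(1)] by blast
        then show ?thesis using dF by simp
      next
        case False
        have e1: "C1 = Z1"
          using not_bigger[OF b b' sub Y maxY fY F True C1(1) C2(1) C1(2) C2(2) False] .
        have fY': "factors G Y = {Z2, Z1}" using fY by blast
        have e2: "C2 = Z2"
          using not_bigger[OF b b' sub Y maxY fY' fY(2)[symmetric] F True C2(1) C1(1) C2(2) C1(2)] False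
          by blast
        have ZM: "Z1 \<in> factors G F" "Z2 \<in> factors G F" using C1 C2 e1 e2 by simp_all
        have eqf: "factors (insert Y G) F = insert Y (factors G F - {Z1, Z2})"
          using fac_insert_merge[OF finG True Y(2) ZM fY(2) Zs(3) Zs(4) covY] by blast
        have "Y \<notin> factors G F" using Y(2) fac_in by blast
        then have "decomp (insert Y (factors G F - {Z1, Z2})) F"
          using decomp_comp[OF dF dY ZM] by blast
        then show ?thesis using eqf by simp
      qed
    qed
  qed
  ultimately show ?thesis unfolding building_iff by blast
qed


lemma main_ind:
  assumes b': "building_set E indep G'" and fl: "flag_building_set E indep G'"
  shows "building_set E indep G \<Longrightarrow> G \<subseteq> G' \<Longrightarrow>
         \<exists>(p::nat) (Gs :: nat \<Rightarrow> 'a set set).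
           Gs p = G \<and> Gs 0 = G' \<and>
           (\<forall>i\<le>p. building_set E indep (Gs i)) \<and>
           (\<forall>i<p. Gs (Suc i) \<subset> Gs i \<and>
                  (\<exists>X. Gs i - Gs (Suc i) = {X} \<and> card (factors (Gs (Suc i)) X) = 2))"
proof (induction "card (G' - G)" arbitrary: G rule: less_induct)
  case less
  have finG': "finite G'" using bs_fin[OF b'] .
  show ?case
  proof (cases "G = G'")
    case True
    show ?thesis
      by (rule exI[of _ 0], rule exI[of _ "\<lambda>_. G'"]) (use less.prems(1) True in auto)
  next
    case False
    then obtain X where X: "X \<in> G'" "X \<notin> G" using less.prems by blast
    define S2 where "S2 = {Y \<in> G' - G. card (factors G Y) = 2}"
    have "S2 \<noteq> {}" unfolding S2_def using exists_two[OF less.prems(1) b' less.prems(2) fl X] by blast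
    moreover have "finite S2" unfolding S2_def using finG' by simp
    ultimately obtain Y where Y: "Y \<in> S2" and Ymax: "\<forall>b\<in>S2. Y \<subseteq> b \<longrightarrow> Y = b"
      using finite_has_maximal[of S2] by blast
    have Yp: "Y \<in> G'" "Y \<notin> G" "card (factors G Y) = 2" using Y unfolding S2_def by blast+
    have maxY: "\<forall>W. W \<in> G' \<and> W \<notin> G \<and> card (factors G W) = 2 \<longrightarrow> \<not> Y \<subset> W"
    proof (intro allI impI notI)
      fix W assume W: "W \<in> G' \<and> W \<notin> G \<and> card (factors G W) = 2" "Y \<subset> W"
      then have "W \<in> S2" unfolding S2_def by blast
      then have "Y = W" using Ymax W(2) by blast
      then show False using W(2) by blast
    qed
    define G1 where "G1 = insert Y G"
    have bG1: "building_set E indep G1" unfolding G1_def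
      using add_building[OF less.prems(1) b' less.prems(2) Yp(1) Yp(2) Yp(3) maxY] .
    have G1s: "G1 \<subseteq> G'" unfolding G1_def using Yp less.prems by blast
    have "G' - G1 = (G' - G) - {Y}" unfolding G1_def by blast
    moreover have "Y \<in> G' - G" using Yp by blast
    moreover have "finite (G' - G)" using finG' by simp
    ultimately have "card (G' - G1) < card (G' - G)"
      using card_Diff1_less by metis
    then obtain p Gs where IH: "Gs p = G1" "Gs 0 = G'" "\<forall>i\<le>p. building_set E indep (Gs i)"
      "\<forall>i<p. Gs (Suc i) \<subset> Gs i \<and> (\<exists>X. Gs i - Gs (Suc i) = {X} \<and> card (factors (Gs (Suc i)) X) = 2)"
      using less.hyps[OF _ bG1 G1s] by blast
    define Gs' where "Gs' = Gs(Suc p := G)"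
    have 1: "Gs' (Suc p) = G" unfolding Gs'_def by simp
    have 2: "Gs' 0 = G'" unfolding Gs'_def using IH(2) by simp
    have 3: "\<forall>i\<le>Suc p. building_set E indep (Gs' i)"
    proof (intro allI impI)
      fix i assume "i \<le> Suc p"
      then show "building_set E indep (Gs' i)"
        using IH(3) less.prems(1) unfolding Gs'_def by (cases "i = Suc p") auto
    qed
    have 4: "\<forall>i<Suc p. Gs' (Suc i) \<subset> Gs' i \<and>
         (\<exists>X. Gs' i - Gs' (Suc i) = {X} \<and> card (factors (Gs' (Suc i)) X) = 2)"
    proof (intro allI impI)
      fix i assume i: "i < Suc p"
      show "Gs' (Suc i) \<subset> Gs' i \<and>
         (\<exists>X. Gs' i - Gs' (Suc i) = {X} \<and> card (factors (Gs' (Suc i)) X) = 2)"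
      proof (cases "i = p")
        case True
        have a: "Gs' i = G1" "Gs' (Suc i) = G" unfolding Gs'_def using True IH(1) by simp_all
        have "G \<subset> G1" unfolding G1_def using Yp by blast
        moreover have "G1 - G = {Y}" unfolding G1_def using Yp by blast
        ultimately show ?thesis unfolding a using Yp(3) by blast
      next
        case False
        then have "i < p" using i by simp
        moreover have "Gs' i = Gs i" "Gs' (Suc i) = Gs (Suc i)" unfolding Gs'_def using \<open>i < p\<close> by simp_all
        ultimately show ?thesis using IH(4) by simp
      qed
    qed
    show ?thesis using 1 2 3 4 by blast
  qed
qed

end

theorem proposition3p21:
  fixes E :: "'a set" and indep :: "'a set \<Rightarrow> bool" and G G' :: "'a set set"
  assumes "matroid E indep" and "loopless E indep"
    and "building_set E indep G" and "building_set E indep G'"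
    and "G \<subseteq> G'"
    and "flag_building_set E indep G'"
  shows "\<exists>(p::nat) (Gs :: nat \<Rightarrow> 'a set set).
           Gs p = G \<and> Gs 0 = G' \<and>
           (\<forall>i\<le>p. building_set E indep (Gs i)) \<and>
           (\<forall>i<p. Gs (Suc i) \<subset> Gs i \<and>
                  (\<exists>X. Gs i - Gs (Suc i) = {X} \<and> card (factors (Gs (Suc i)) X) = 2))"
proof -
  interpret lmat E indep using assms(1,2) by unfold_locales
  show ?thesis using main_ind[OF assms(4) assms(6) assms(3) assms(5)] .
qed

end
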